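(* For every integer $k\ge 3$, the consensus number of the $\text{WRN}_{k}$ object is $1$.
   Context: A $\text{WRN}_{k}$ (Write and Read Next) object is a deterministic atomic shared object with a single operation $\texttt{WRN}(i,v)$, where $i\in\{0,\dots,k-1\}$ and $v\neq\bot$. Its state consists of $k$ values $A[0],\dots,A[k-1]$, initially all $\bot$; the operation $\texttt{WRN}(i,v)$ atomically sets $A[i]\gets v$ and returns $A[(i+1)\bmod k]$. Model: asynchronous shared memory, processes communicate by atomic operations on shared objects and may crash. Consensus task: each process has an input; every non-faulty process outputs a value such that every output is some process's input and all outputs are equal. An object has consensus number $n$ if there is a wait-free algorithm using only copies of the object and read-write registers solving consensus for $n$ processes, but no such algorithm for $n+1$ processes (wait-free: each non-crashed process outputs within finitely many of its own steps). *)

theory Defs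
  imports Main
begin

text \<open>Processes are numbered 0,...,n-1.
Shared objects are indexed by nat; each object is either a read-write register
or a copy of the WRN_k object. The contents of an object are a function
nat => 'v option (None = bottom); a register uses only index 0, a WRN_k object
uses the indices 0..k-1.\<close>

datatype 'v operation = Read | Write 'v | WRN nat 'v

datatype ('a, 'v) action = Decide 'a | Invoke nat "'v operation"

record ('a, 's, 'v) protocol =
  init    :: "nat \<Rightarrow> 'a \<Rightarrow> 's"
  act     :: "nat \<Rightarrow> 's \<Rightarrow> ('a, 'v) action"
  upd     :: "nat \<Rightarrow> 's \<Rightarrow> 'v option \<Rightarrow> 's"
  isWRN   :: "nat \<Rightarrow> bool"
  reginit :: "nat \<Rightarrow> 'v option"

fun apply_op :: "nat \<Rightarrow> bool \<Rightarrow> (nat \<Rightarrow> 'v option) \<Rightarrow> 'v operation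
                 \<Rightarrow> (nat \<Rightarrow> 'v option) \<times> 'v option" where
  "apply_op k False m Read = (m, m 0)"
| "apply_op k False m (Write v) = (m(0 := Some v), None)"
| "apply_op k True m (WRN i v) = (m(i := Some v), m ((i + 1) mod k))"
| "apply_op k _ m _ = (m, None)"

definition well_formed :: "nat \<Rightarrow> ('a, 's, 'v) protocol \<Rightarrow> bool" where
  "well_formed k P \<longleftrightarrow>
     (\<forall>p s obj op. act P p s = Invoke obj op \<longrightarrow>
        (if isWRN P obj then (\<exists>i v. op = WRN i v \<and> i < k)
         else (op = Read \<or> (\<exists>v. op = Write v))))"

type_synonym ('s, 'v) config = "(nat \<Rightarrow> 's) \<times> (nat \<Rightarrow> nat \<Rightarrow> 'v option)"

definition initial :: "('a, 's, 'v) protocol \<Rightarrow> (nat \<Rightarrow> 'a) \<Rightarrow> ('s, 'v) config" where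
  "initial P inp = ((\<lambda>p. init P p (inp p)),
                    (\<lambda>obj j. if isWRN P obj then None else reginit P obj))"

definition step :: "nat \<Rightarrow> ('a, 's, 'v) protocol \<Rightarrow> ('s, 'v) config \<Rightarrow> nat \<Rightarrow> ('s, 'v) config" where
  "step k P C p =
     (case act P p (fst C p) of
        Decide a \<Rightarrow> C
      | Invoke obj op \<Rightarrow>
          (let (m', r) = apply_op k (isWRN P obj) (snd C obj) op
           in ((fst C)(p := upd P p (fst C p) r), (snd C)(obj := m'))))"

definition exec :: "nat \<Rightarrow> ('a, 's, 'v) protocol \<Rightarrow> (nat \<Rightarrow> 'a) \<Rightarrow> nat list \<Rightarrow> ('s, 'v) config" where
  "exec k P inp xs = foldl (step k P) (initial P inp) xs"

definition decision :: "('a, 's, 'v) protocol \<Rightarrow> ('s, 'v) config \<Rightarrow> nat \<Rightarrow> 'a option" where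
  "decision P C p = (case act P p (fst C p) of Decide a \<Rightarrow> Some a | Invoke _ _ \<Rightarrow> None)"

text \<open>Wait-freedom: in every infinite schedule over the n processes (processes that
stop being scheduled have crashed), every process taking infinitely many steps decides.\<close>
definition wait_free :: "nat \<Rightarrow> nat \<Rightarrow> ('a, 's, 'v) protocol \<Rightarrow> (nat \<Rightarrow> 'a) \<Rightarrow> bool" where
  "wait_free k n P inp \<longleftrightarrow>
     (\<forall>\<sigma> :: nat \<Rightarrow> nat. (\<forall>i. \<sigma> i < n) \<longrightarrow>
        (\<forall>p<n. infinite {i. \<sigma> i = p} \<longrightarrow>
           (\<exists>j. decision P (exec k P inp (map \<sigma> [0..<j])) p \<noteq> None)))"

definition solves_consensus :: "nat \<Rightarrow> nat \<Rightarrow> ('a, 's, 'v) protocol \<Rightarrow> bool" where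
  "solves_consensus k n P \<longleftrightarrow> well_formed k P \<and>
     (\<forall>inp :: nat \<Rightarrow> 'a.
        wait_free k n P inp \<and>
        (\<forall>xs. set xs \<subseteq> {..<n} \<longrightarrow>
           (\<forall>p<n. \<forall>q<n. \<forall>a b.
              decision P (exec k P inp xs) p = Some a \<longrightarrow>
              decision P (exec k P inp xs) q = Some b \<longrightarrow>
              a = b \<and> (\<exists>r<n. inp r = a))))"

end

theory Submission
  imports Defs
begin

lemma step_other: "q \<noteq> p \<Longrightarrow> fst (step k P C q) p = fst C p"
  by (auto simp: step_def Let_def split: action.split prod.split)

lemma decision_cong: "fst C p = fst D p \<Longrightarrow> decision P C p = decision P D p"
  by (simp add: decision_def)

lemma decision_step:
  assumes "decision P C p = Some a" shows "decision P (step k P C q) p = Some a"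
proof (cases "q = p")
  case True
  from assms have "act P p (fst C p) = Decide a"
    by (auto simp: decision_def split: action.splits)
  then show ?thesis using True assms by (simp add: step_def)
next
  case False
  then show ?thesis using assms decision_cong[of "step k P C q" p C P] step_other by metis
qed

lemma decision_foldl:
  "decision P C p = Some a \<Longrightarrow> decision P (foldl (step k P) C ys) p = Some a"
proof (induction ys arbitrary: C)
  case Nil then show ?case by simp
next
  case (Cons y ys) then show ?case using decision_step[of P C p a k y] by simp
qed

lemma exec_append: "exec k P inp (xs @ ys) = foldl (step k P) (exec k P inp xs) ys"
  by (simp add: exec_def)

lemma step_inv:
  assumes "act P p (fst C p) = Invoke ob op" "apply_op k (isWRN P ob) (snd C ob) op = (m, r)"
  shows "step k P C p = ((fst C)(p := upd P p (fst C p) r), (snd C)(ob := m))"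
  using assms by (simp add: step_def)

lemma step_Decide: "act P p (fst C p) = Decide d \<Longrightarrow> step k P C p = C"
  by (simp add: step_def)

lemma agree_step:
  assumes e1: "fst C q = fst D q" and e2: "snd C = snd D"
  shows "fst (step k P C q) q = fst (step k P D q) q \<and> snd (step k P C q) = snd (step k P D q)"
proof (cases "act P q (fst C q)")
  case (Decide d)
  then have "act P q (fst D q) = Decide d" using e1 by simp
  then show ?thesis using Decide step_Decide[of P q C d k] step_Decide[of P q D d k] e1 e2 by simp
next
  case (Invoke ob op)
  obtain m r where ap: "apply_op k (isWRN P ob) (snd C ob) op = (m, r)"
    by (cases "apply_op k (isWRN P ob) (snd C ob) op")
  have i2: "act P q (fst D q) = Invoke ob op" using e1 Invoke by simp
  have ap2: "apply_op k (isWRN P ob) (snd D ob) op = (m, r)" using ap e2 by simp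
  show ?thesis using step_inv[OF Invoke ap] step_inv[OF i2 ap2] e1 e2 by simp
qed

lemma agree_rep:
  assumes "fst C q = fst D q" "snd C = snd D"
  shows "fst (foldl (step k P) C (replicate m q)) q = fst (foldl (step k P) D (replicate m q)) q \<and>
         snd (foldl (step k P) C (replicate m q)) = snd (foldl (step k P) D (replicate m q))"
  using assms
proof (induction m arbitrary: C D)
  case 0 then show ?case by simp
next
  case (Suc m)
  have h: "fst (step k P C q) q = fst (step k P D q) q" "snd (step k P C q) = snd (step k P D q)"
    using agree_step[OF Suc.prems, of k P] by auto
  show ?case using Suc.IH[OF h] by simp
qed

lemma solo:
  assumes wf: "wait_free k n P inp" and xs: "set xs \<subseteq> {..<n}" and p: "p < n"
  shows "\<exists>m a. decision P (exec k P inp (xs @ replicate m p)) p = Some a"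
proof -
  define \<sigma> where "\<sigma> = (\<lambda>i. if i < length xs then xs ! i else p)"
  have s: "\<forall>i. \<sigma> i < n" using xs p by (auto simp: \<sigma>_def dest: nth_mem)
  have "{length xs..} \<subseteq> {i. \<sigma> i = p}" by (auto simp: \<sigma>_def)
  then have inf: "infinite {i. \<sigma> i = p}" using infinite_Ici finite_subset by blast
  obtain j where dj: "decision P (exec k P inp (map \<sigma> [0..<j])) p \<noteq> None"
    using wf s inf p unfolding wait_free_def by blast
  then obtain a where da: "decision P (exec k P inp (map \<sigma> [0..<j])) p = Some a" by auto
  show ?thesis
  proof (cases "j \<le> length xs")
    case True
    have "map \<sigma> [0..<j] = take j xs"
      by (rule nth_equalityI) (use True in \<open>auto simp: \<sigma>_def\<close>)
    then have "decision P (exec k P inp (take j xs @ drop j xs)) p = Some a"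
      using da by (simp only: exec_append decision_foldl)
    then have "decision P (exec k P inp (xs @ replicate 0 p)) p = Some a" by simp
    then show ?thesis by blast
  next
    case False
    have "map \<sigma> [0..<j] = xs @ replicate (j - length xs) p"
      by (rule nth_equalityI) (use False in \<open>auto simp: \<sigma>_def nth_append\<close>)
    then show ?thesis using da by metis
  qed
qed

lemma mod1: assumes "i < k" "2 \<le> k" shows "(i + 1) mod k \<noteq> (i::nat)"
proof (cases "i + 1 < k")
  case True then show ?thesis by simp
next
  case False
  then have "i + 1 = k" using assms by simp
  then show ?thesis using assms by simp
qed

lemma mod2: assumes "i < k" "3 \<le> k" shows "((i + 1) mod k + 1) mod k \<noteq> (i::nat)"
proof (cases "i + 1 < k")
  case True
  show ?thesis
  proof (cases "i + 2 < k")
    case True then show ?thesis by simp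
  next
    case False
    then have "i + 2 = k" using \<open>i + 1 < k\<close> by simp
    then show ?thesis using assms True by simp
  qed
next
  case False
  then have "i + 1 = k" using assms by simp
  then show ?thesis using assms by simp
qed

lemma commute:
  assumes wf: "well_formed k P" and k3: "3 \<le> k"
    and a0: "act P 0 (fst C 0) = Invoke o0 op0"
    and a1: "act P 1 (fst C 1) = Invoke o1 op1"
  shows "(fst (step k P (step k P C 0) 1) 0 = fst (step k P (step k P C 1) 0) 0 \<and>
          snd (step k P (step k P C 0) 1) = snd (step k P (step k P C 1) 0)) \<or>
         (fst (step k P (step k P C 0) 1) 1 = fst (step k P C 1) 1 \<and>
          snd (step k P (step k P C 0) 1) = snd (step k P C 1)) \<or>
         (fst (step k P (step k P C 1) 0) 0 = fst (step k P C 0) 0 \<and>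
          snd (step k P (step k P C 1) 0) = snd (step k P C 0)) \<or>
         (fst (step k P (step k P C 0) 1) 1 = fst (step k P (step k P C 1) 0) 1 \<and>
          snd (step k P (step k P C 0) 1) = snd (step k P (step k P C 1) 0))"
proof -
  define F where "F = fst C"
  define M where "M = snd C"
  have C: "C = (F, M)" by (simp add: F_def M_def)
  obtain m0 r0 where ap0: "apply_op k (isWRN P o0) (M o0) op0 = (m0, r0)" by (cases "apply_op k (isWRN P o0) (M o0) op0")
  obtain m1 r1 where ap1: "apply_op k (isWRN P o1) (M o1) op1 = (m1, r1)" by (cases "apply_op k (isWRN P o1) (M o1) op1")
  obtain m01 r01 where ap01: "apply_op k (isWRN P o1) ((M(o0 := m0)) o1) op1 = (m01, r01)"
    by (cases "apply_op k (isWRN P o1) ((M(o0 := m0)) o1) op1")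
  obtain m10 r10 where ap10: "apply_op k (isWRN P o0) ((M(o1 := m1)) o0) op0 = (m10, r10)"
    by (cases "apply_op k (isWRN P o0) ((M(o1 := m1)) o0) op0")
  have S0: "step k P C 0 = (F(0 := upd P 0 (F 0) r0), M(o0 := m0))"
    using step_inv[of P 0 C o0 op0 k m0 r0] a0 ap0 by (simp add: F_def M_def)
  have S1: "step k P C 1 = (F(1 := upd P 1 (F 1) r1), M(o1 := m1))"
    using step_inv[of P 1 C o1 op1 k m1 r1] a1 ap1 by (simp add: F_def M_def)
  have S01: "step k P (step k P C 0) 1 = ((F(0 := upd P 0 (F 0) r0))(1 := upd P 1 (F 1) r01), (M(o0 := m0))(o1 := m01))"
    using step_inv[of P 1 "step k P C 0" o1 op1 k m01 r01] a1 ap01 S0 by (simp add: F_def M_def)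
  have S10: "step k P (step k P C 1) 0 = ((F(1 := upd P 1 (F 1) r1))(0 := upd P 0 (F 0) r10), (M(o1 := m1))(o0 := m10))"
    using step_inv[of P 0 "step k P C 1" o0 op0 k m10 r10] a0 ap10 S1 by (simp add: F_def M_def)
  have w0: "if isWRN P o0 then (\<exists>i v. op0 = WRN i v \<and> i < k) else (op0 = Read \<or> (\<exists>v. op0 = Write v))"
    using wf a0 unfolding well_formed_def by blast
  have w1: "if isWRN P o1 then (\<exists>i v. op1 = WRN i v \<and> i < k) else (op1 = Read \<or> (\<exists>v. op1 = Write v))"
    using wf a1 unfolding well_formed_def by blast
  have key: "(r0 = r10 \<and> (M(o0 := m0))(o1 := m01) = (M(o1 := m1))(o0 := m10)) \<or>
             (r01 = r1 \<and> (M(o0 := m0))(o1 := m01) = M(o1 := m1)) \<or>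
             (r10 = r0 \<and> (M(o1 := m1))(o0 := m10) = M(o0 := m0)) \<or>
             (r01 = r1 \<and> (M(o0 := m0))(o1 := m01) = (M(o1 := m1))(o0 := m10))"
  proof (cases "o0 = o1")
    case False
    then have "m01 = m1" "r01 = r1" "m10 = m0" "r10 = r0" using ap0 ap1 ap01 ap10 by auto
    then show ?thesis using False by (simp add: fun_upd_twist)
  next
    case True
    note eq = True
    show ?thesis
    proof (cases "isWRN P o0")
      case False
      then have w0: "op0 = Read \<or> (\<exists>v. op0 = Write v)" and w1: "op1 = Read \<or> (\<exists>v. op1 = Write v)"
        using w0 w1 eq by auto
      show ?thesis
      proof (cases "op0 = Read")
        case True
        then have "m0 = M o0" "m01 = m1" "r01 = r1" using ap0 ap1 ap01 eq False by auto
        then show ?thesis using eq by simp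
      next
        case r0: False
        show ?thesis
        proof (cases "op1 = Read")
          case True
          then have "m1 = M o1" "m10 = m0" "r10 = r0" using ap0 ap1 ap10 eq False by auto
          then show ?thesis using eq by simp
        next
          case r1: False
          obtain v0 v1 where "op0 = Write v0" "op1 = Write v1" using r0 r1 w0 w1 by auto
          then have "m0 = (M o0)(0 := Some v0)" "m1 = (M o0)(0 := Some v1)"
            "m01 = (m0)(0 := Some v1)" "r01 = None" "r1 = None"
            using ap0 ap1 ap01 eq False by auto
          then show ?thesis using eq by simp
        qed
      qed
    next
      case True
      then obtain i v j w where o0: "op0 = WRN i v" "i < k" and o1: "op1 = WRN j w" "j < k"
        using w0 w1 eq by auto
      have m0: "m0 = (M o0)(i := Some v)" "r0 = M o0 ((i + 1) mod k)" using ap0 o0 True by auto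
      have m1: "m1 = (M o0)(j := Some w)" "r1 = M o0 ((j + 1) mod k)" using ap1 o1 True eq by auto
      have m01: "m01 = m0(j := Some w)" "r01 = m0 ((j + 1) mod k)" using ap01 o1 True eq by auto
      have m10: "m10 = m1(i := Some v)" "r10 = m1 ((i + 1) mod k)" using ap10 o0 True eq by auto
      show ?thesis
      proof (cases "i = j")
        case True
        have "(i + 1) mod k \<noteq> i" using mod1[of i k] o0 k3 by simp
        then show ?thesis using True eq m0 m1 m01 by simp
      next
        case ij: False
        show ?thesis
        proof (cases "j = (i + 1) mod k")
          case True
          have "(j + 1) mod k \<noteq> i" using mod2[of i k] o0 k3 True by simp
          then show ?thesis using eq m0 m1 m01 m10 ij by (simp add: fun_upd_twist)
        next
          case ji: False
          show ?thesis
          proof (cases "i = (j + 1) mod k")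
            case True
            have "(i + 1) mod k \<noteq> j" using mod2[of j k] o1 k3 True by simp
            then show ?thesis using eq m0 m1 m01 m10 ij by (simp add: fun_upd_twist)
          next
            case False
            then show ?thesis using eq m0 m1 m01 m10 ij ji by (simp add: fun_upd_twist)
          qed
        qed
      qed
    qed
  qed
  show ?thesis unfolding S01 unfolding S10 unfolding S0 S1 using key by auto
qed

definition val :: "nat \<Rightarrow> ('a, 's, 'v) protocol \<Rightarrow> (nat \<Rightarrow> 'a) \<Rightarrow> nat list \<Rightarrow> 'a \<Rightarrow> bool" where
  "val k P inp xs a \<longleftrightarrow> (\<exists>ys p. set ys \<subseteq> {..<2} \<and> p < 2 \<and> decision P (exec k P inp (xs @ ys)) p = Some a)"

definition biv :: "nat \<Rightarrow> ('a, 's, 'v) protocol \<Rightarrow> (nat \<Rightarrow> 'a) \<Rightarrow> nat list \<Rightarrow> bool" where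
  "biv k P inp xs \<longleftrightarrow> (\<exists>a b. a \<noteq> b \<and> val k P inp xs a \<and> val k P inp xs b)"

context
  fixes k :: nat and P :: "('a, 's, 'v) protocol" and inp :: "nat \<Rightarrow> 'a"
  assumes sc: "solves_consensus k 2 P" and k3: "3 \<le> k" and dif: "inp 0 \<noteq> inp 1"
begin

lemma wfree: "wait_free k 2 P inp'" using sc unfolding solves_consensus_def by blast

lemma wform: "well_formed k P" using sc unfolding solves_consensus_def by blast

lemma agr:
  assumes "set xs \<subseteq> {..<2}" "p < 2" "q < 2"
    "decision P (exec k P inp' xs) p = Some a" "decision P (exec k P inp' xs) q = Some b"
  shows "a = b \<and> (\<exists>r<2. inp' r = a)"
  using sc assms unfolding solves_consensus_def by blast

lemma val_ex: "set xs \<subseteq> {..<2} \<Longrightarrow> \<exists>a. val k P inp xs a"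
proof -
  assume xs: "set xs \<subseteq> {..<2}"
  obtain m a where "decision P (exec k P inp (xs @ replicate m 0)) 0 = Some a"
    using solo[OF wfree[of inp] xs, of 0] by auto
  then have "val k P inp xs a" unfolding val_def
    by (intro exI[of _ "replicate m 0"] exI[of _ 0]) auto
  then show ?thesis by blast
qed

lemma val_mono: "val k P inp (xs @ us) a \<Longrightarrow> set us \<subseteq> {..<2} \<Longrightarrow> val k P inp xs a"
  unfolding val_def by (metis append.assoc set_append Un_subset_iff)

lemma val_split:
  assumes "val k P inp xs a" shows "val k P inp (xs @ [0]) a \<or> val k P inp (xs @ [1]) a"
proof -
  obtain ys p where ys: "set ys \<subseteq> {..<2}" "p < 2" "decision P (exec k P inp (xs @ ys)) p = Some a"
    using assms unfolding val_def by blast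
  show ?thesis
  proof (cases ys)
    case Nil
    have "decision P (exec k P inp xs) p = Some a" using ys Nil by simp
    then have "decision P (foldl (step k P) (exec k P inp xs) [0]) p = Some a" by (rule decision_foldl)
    then have "decision P (exec k P inp ((xs @ [0]) @ [])) p = Some a" by (simp only: append_Nil2 exec_append)
    then have "val k P inp (xs @ [0]) a" unfolding val_def using ys(2)
      by (intro exI[of _ "[]"] exI[of _ p]) simp
    then show ?thesis by blast
  next
    case (Cons r ys')
    then have "r = 0 \<or> r = 1" "set ys' \<subseteq> {..<2}" using ys by auto
    moreover have "(xs @ [r]) @ ys' = xs @ ys" using Cons by simp
    then have "decision P (exec k P inp ((xs @ [r]) @ ys')) p = Some a" using ys(3) by simp
    ultimately have "val k P inp (xs @ [r]) a" unfolding val_def using ys(2)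
      by (intro exI[of _ ys'] exI[of _ p]) simp
    then show ?thesis using \<open>r = 0 \<or> r = 1\<close> by blast
  qed
qed

lemma decided_univ:
  assumes "set xs \<subseteq> {..<2}" "p < 2" "decision P (exec k P inp xs) p = Some a" "val k P inp xs b"
  shows "b = a"
proof -
  obtain ys q where ys: "set ys \<subseteq> {..<2}" "q < 2" "decision P (exec k P inp (xs @ ys)) q = Some b"
    using assms unfolding val_def by blast
  have "decision P (exec k P inp (xs @ ys)) p = Some a"
    using assms(3) by (simp add: exec_append decision_foldl)
  then show ?thesis using agr[of "xs @ ys" p q inp a b] assms ys by auto
qed

lemma indist:
  assumes "set ys \<subseteq> {..<2}" "set zs \<subseteq> {..<2}" "q < 2"
    "fst (exec k P inp ys) q = fst (exec k P inp zs) q" "snd (exec k P inp ys) = snd (exec k P inp zs)"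
  shows "\<exists>b. val k P inp ys b \<and> val k P inp zs b"
proof -
  obtain m b where d: "decision P (exec k P inp (ys @ replicate m q)) q = Some b"
    using solo[OF wfree[of inp] assms(1) assms(3)] by auto
  have "fst (exec k P inp (ys @ replicate m q)) q = fst (exec k P inp (zs @ replicate m q)) q"
    using agree_rep[OF assms(4,5), where k=k and P=P and m=m] by (simp add: exec_append)
  then have d2: "decision P (exec k P inp (zs @ replicate m q)) q = Some b"
    using d decision_cong by metis
  have r: "set (replicate m q) \<subseteq> {..<2}" using assms(3) by auto
  have "val k P inp ys b" unfolding val_def using d r assms(3)
    by (intro exI[of _ "replicate m q"] exI[of _ q]) simp
  moreover have "val k P inp zs b" unfolding val_def using d2 r assms(3)
    by (intro exI[of _ "replicate m q"] exI[of _ q]) simp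
  ultimately show ?thesis by blast
qed

lemma val_own:
  assumes p: "p < 2" shows "val k P inp [] (inp p)"
proof -
  define inp' where "inp' = (\<lambda>_::nat. inp p)"
  obtain m a where d: "decision P (exec k P inp' ([] @ replicate m p)) p = Some a"
    using solo[OF wfree, of "[]" p inp'] p by auto
  have rp: "set (replicate m p) \<subseteq> {..<2}" using p by auto
  then have "a = inp p" using agr[of "replicate m p" p p inp' a a] p d by (auto simp: inp'_def)
  have "fst (initial P inp') p = fst (initial P inp) p" "snd (initial P inp') = snd (initial P inp)"
    by (auto simp: initial_def inp'_def)
  from agree_rep[OF this, where k=k and P=P and m=m]
  have "fst (exec k P inp' (replicate m p)) p = fst (exec k P inp (replicate m p)) p"
    by (simp add: exec_def)
  then have "decision P (exec k P inp ([] @ replicate m p)) p = Some (inp p)"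
    using d \<open>a = inp p\<close> decision_cong by (metis append_Nil)
  then show ?thesis unfolding val_def using p by (intro exI[of _ "replicate m p"] exI[of _ p]) auto
qed

lemma biv_init: "biv k P inp []"
  unfolding biv_def using val_own[of 0] val_own[of 1] dif by auto

lemma critical_exists:
  "\<exists>xs. set xs \<subseteq> {..<2} \<and> biv k P inp xs \<and> \<not> biv k P inp (xs @ [0]) \<and> \<not> biv k P inp (xs @ [1])"
proof (rule ccontr)
  assume nc: "\<not> ?thesis"
  have H: "\<exists>r. r < 2 \<and> biv k P inp (xs @ [r])" if "set xs \<subseteq> {..<2}" "biv k P inp xs" for xs
  proof (cases "biv k P inp (xs @ [0])")
    case True then show ?thesis by (intro exI[of _ 0]) simp
  next
    case False
    have "\<not> (set xs \<subseteq> {..<2} \<and> biv k P inp xs \<and> \<not> biv k P inp (xs @ [0]) \<and> \<not> biv k P inp (xs @ [1]))"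
      using nc by (rule contrapos_nn) (rule exI)
    then have "biv k P inp (xs @ [1])" using that False by simp
    then show ?thesis by (intro exI[of _ 1]) simp
  qed
  define g where "g xs = (SOME r. r < 2 \<and> biv k P inp (xs @ [r]))" for xs
  define f where "f = rec_nat [] (\<lambda>_ ys. ys @ [g ys])"
  have f0: "f 0 = []" and fS: "f (Suc n) = f n @ [g (f n)]" for n by (simp_all add: f_def)
  have gp: "g xs < 2 \<and> biv k P inp (xs @ [g xs])" if "set xs \<subseteq> {..<2}" "biv k P inp xs" for xs
    unfolding g_def using someI_ex[OF H[OF that]] .
  have inv: "set (f n) \<subseteq> {..<2} \<and> biv k P inp (f n)" for n
  proof (induction n)
    case 0 then show ?case using f0 biv_init by simp
  next
    case (Suc n)
    then show ?case using gp[of "f n"] fS[of n] by auto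
  qed
  define \<sigma> where "\<sigma> i = g (f i)" for i
  have s2: "\<sigma> i < 2" for i using gp[of "f i"] inv[of i] by (simp add: \<sigma>_def)
  have mapf: "map \<sigma> [0..<j] = f j" for j
    by (induction j) (simp_all add: f0 fS \<sigma>_def)
  have "UNIV = {i. \<sigma> i = 0} \<union> {i. \<sigma> i = 1}" using s2 by (auto simp: less_2_cases_iff)
  then have "infinite {i. \<sigma> i = 0} \<or> infinite {i. \<sigma> i = 1}"
    using infinite_UNIV_nat finite_Un by metis
  then obtain p where p: "p < 2" "infinite {i. \<sigma> i = p}" by (auto intro: that[of 0] that[of 1])
  obtain j where "decision P (exec k P inp (map \<sigma> [0..<j])) p \<noteq> None"
    using wfree[of inp] s2 p unfolding wait_free_def by blast
  then obtain d where d: "decision P (exec k P inp (f j)) p = Some d" using mapf by auto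
  obtain a b where "a \<noteq> b" "val k P inp (f j) a" "val k P inp (f j) b"
    using inv[of j] unfolding biv_def by blast
  moreover have "set (f j) \<subseteq> {..<2}" using inv[of j] by simp
  ultimately have "a = d" "b = d" using decided_univ[OF _ p(1) d] by auto
  then show False using \<open>a \<noteq> b\<close> by simp
qed

lemma critical_false:
  assumes xs: "set xs \<subseteq> {..<2}" and bv: "biv k P inp xs"
    and n0: "\<not> biv k P inp (xs @ [0])" and n1: "\<not> biv k P inp (xs @ [1])"
  shows False
proof -
  have xs0: "set (xs @ [0]) \<subseteq> {..<2}" and xs1: "set (xs @ [1]) \<subseteq> {..<2}" using xs by auto
  obtain a0 where va0: "val k P inp (xs @ [0]) a0" using val_ex[OF xs0] by blast
  have u0: "c = a0" if "val k P inp (xs @ [0]) c" for c using n0 va0 that unfolding biv_def by blast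
  obtain a1 where va1: "val k P inp (xs @ [1]) a1" using val_ex[OF xs1] by blast
  have u1: "c = a1" if "val k P inp (xs @ [1]) c" for c using n1 va1 that unfolding biv_def by blast
  obtain a b where ab: "a \<noteq> b" "val k P inp xs a" "val k P inp xs b"
    using bv unfolding biv_def by blast
  have "a \<in> {a0, a1}" "b \<in> {a0, a1}" using val_split[OF ab(2)] val_split[OF ab(3)] u0 u1 by auto
  then have a01: "a0 \<noteq> a1" using ab(1) by auto
  have bad: False if q: "q < 2" and us: "set us0 \<subseteq> {..<2}" "set us1 \<subseteq> {..<2}"
    and e: "fst (exec k P inp (xs @ 0 # us0)) q = fst (exec k P inp (xs @ 1 # us1)) q"
      "snd (exec k P inp (xs @ 0 # us0)) = snd (exec k P inp (xs @ 1 # us1))" for q us0 us1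
  proof -
    have s0: "set (xs @ 0 # us0) \<subseteq> {..<2}" and s1: "set (xs @ 1 # us1) \<subseteq> {..<2}" using xs us by auto
    obtain c where c: "val k P inp (xs @ 0 # us0) c" "val k P inp (xs @ 1 # us1) c"
      using indist[OF s0 s1 q e] by blast
    have "val k P inp ((xs @ [0]) @ us0) c" using c(1) by simp
    then have "c = a0" using u0 val_mono us(1) by blast
    moreover have "val k P inp ((xs @ [1]) @ us1) c" using c(2) by simp
    then have "c = a1" using u1 val_mono us(2) by blast
    ultimately show False using a01 by simp
  qed
  have nd: "decision P (exec k P inp xs) p = None" if "p < 2" for p
  proof (rule ccontr)
    assume "decision P (exec k P inp xs) p \<noteq> None"
    then obtain d where "decision P (exec k P inp xs) p = Some d" by auto
    then have "a = d" "b = d" using decided_univ[OF xs that] ab by auto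
    then show False using ab(1) by simp
  qed
  define C where "C = exec k P inp xs"
  obtain o0 op0 where ac0: "act P 0 (fst C 0) = Invoke o0 op0"
    using nd[of 0] unfolding C_def decision_def by (cases "act P 0 (fst (exec k P inp xs) 0)") auto
  obtain o1 op1 where ac1: "act P 1 (fst C 1) = Invoke o1 op1"
    using nd[of 1] unfolding C_def decision_def by (cases "act P 1 (fst (exec k P inp xs) 1)") auto
  have e01: "exec k P inp (xs @ 0 # [1]) = step k P (step k P C 0) 1" by (simp add: exec_append C_def)
  have e10: "exec k P inp (xs @ 1 # [0]) = step k P (step k P C 1) 0" by (simp add: exec_append C_def)
  have e0: "exec k P inp (xs @ 0 # []) = step k P C 0" by (simp add: exec_append C_def)
  have e1: "exec k P inp (xs @ 1 # []) = step k P C 1" by (simp add: exec_append C_def)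
  have s01: "set [0::nat] \<subseteq> {..<2}" "set [1::nat] \<subseteq> {..<2}" "set ([]::nat list) \<subseteq> {..<2}" by auto
  from commute[OF wform k3 ac0 ac1] show False
  proof (elim disjE conjE)
    assume "fst (step k P (step k P C 0) 1) 0 = fst (step k P (step k P C 1) 0) 0"
      "snd (step k P (step k P C 0) 1) = snd (step k P (step k P C 1) 0)"
    then show False using bad[of 0 "[1]" "[0]"] s01 unfolding e01 e10 by simp
  next
    assume "fst (step k P (step k P C 0) 1) 1 = fst (step k P C 1) 1"
      "snd (step k P (step k P C 0) 1) = snd (step k P C 1)"
    then show False using bad[of 1 "[1]" "[]"] s01 unfolding e01 e1 by simp
  next
    assume "fst (step k P (step k P C 1) 0) 0 = fst (step k P C 0) 0"
      "snd (step k P (step k P C 1) 0) = snd (step k P C 0)"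
    then show False using bad[of 0 "[]" "[0]"] s01 unfolding e0 e10 by simp
  next
    assume "fst (step k P (step k P C 0) 1) 1 = fst (step k P (step k P C 1) 0) 1"
      "snd (step k P (step k P C 0) 1) = snd (step k P (step k P C 1) 0)"
    then show False using bad[of 1 "[1]" "[0]"] s01 unfolding e01 e10 by simp
  qed
qed

end

lemma foldl_decide:
  assumes "\<And>p s. \<exists>d. act P p s = Decide d"
  shows "foldl (step k P) C xs = C"
proof (induction xs)
  case Nil then show ?case by simp
next
  case (Cons x xs)
  obtain d where "act P x (fst C x) = Decide d" using assms by blast
  then have "step k P C x = C" by (rule step_Decide)
  then show ?case using Cons by simp
qed

theorem corollary2:
  fixes k :: nat
  assumes "k \<ge> 3" and "\<exists>x y :: 'a. x \<noteq> y"
  shows "(\<exists>P :: ('a, 'a, 'a) protocol. solves_consensus k 1 P) \<and>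
         (\<forall>P :: ('a, 's, 'v) protocol. \<not> solves_consensus k 2 P)"
proof
  define P0 :: "('a, 'a, 'a) protocol" where
    "P0 = \<lparr>init = (\<lambda>p a. a), act = (\<lambda>p s. Decide s), upd = (\<lambda>p s r. s),
           isWRN = (\<lambda>_. False), reginit = (\<lambda>_. None)\<rparr>"
  have ad: "\<And>p s. \<exists>d. act P0 p s = Decide d" by (simp add: P0_def)
  have ex: "exec k P0 inp xs = initial P0 inp" for inp xs
    unfolding exec_def by (rule foldl_decide[OF ad])
  have dec: "decision P0 (exec k P0 inp xs) p = Some (inp p)" for inp xs p
    unfolding decision_def ex by (simp add: P0_def initial_def)
  have wfP: "well_formed k P0" unfolding well_formed_def P0_def by simp
  have "solves_consensus k 1 P0"
    unfolding solves_consensus_def wait_free_def using wfP by (auto simp: dec)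
  then show "\<exists>P :: ('a, 'a, 'a) protocol. solves_consensus k 1 P" by blast
next
  show "\<forall>P :: ('a, 's, 'v) protocol. \<not> solves_consensus k 2 P"
  proof (intro allI notI)
    fix P :: "('a, 's, 'v) protocol"
    assume sc: "solves_consensus k 2 P"
    obtain x y :: 'a where xy: "x \<noteq> y" using assms(2) by blast
    define inp where "inp = (\<lambda>i::nat. if i = 0 then x else y)"
    have dif: "inp 0 \<noteq> inp 1" using xy by (simp add: inp_def)
    obtain xs where "set xs \<subseteq> {..<2}" "biv k P inp xs" "\<not> biv k P inp (xs @ [0])" "\<not> biv k P inp (xs @ [1])"
      using critical_exists[OF sc assms(1) dif] by blast
    then show False using critical_false[OF sc assms(1) dif] by blast
  qed
qed

end
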